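(* Let $\Gamma$ be a $W$-generic metric graph, with $W:\Gamma\to\mathbb{R}$ of class $C^1$, and let $f_k$, $\lambda_k$ be the eigenfunctions and eigenvalues of $H_W=-\frac{\partial^2}{\partial x^2}+W$ with Dirichlet boundary and Neumann–Kirchhoff vertex conditions. Let $k_1<\dots<k_M$ and nonzero reals $a_1,\dots,a_M$ be given, and define $g(x,y)=\sum_{i=1}^{M}a_ie^{-\lambda_{k_i}y}f_{k_i}(x)$ for $x\in\Gamma$, $y\in\mathbb{R}$. Then $g$ has no isolated zero $(x_0,y_0)$ with $x_0$ in the interior of an edge.
   Context: A metric graph is connected with finitely many edges of finite length, each identified with an interval. $H_W$ acts edgewise on $\bigoplus_e H^2(e)$ with Dirichlet conditions at degree-one vertices and, at inner vertices (degree $\ge2$), continuity and vanishing sum of the outgoing derivatives. Eigenvalues $\lambda_1\le\lambda_2\le\dots$ are counted with multiplicity, with $L^2$-orthogonal eigenfunctions $f_k$. $\Gamma$ is $W$-generic if no eigenfunction of $H_W$ vanishes at an inner vertex. An isolated zero of $g$ is a zero $(x_0,y_0)$ having a neighbourhood in (edge interior)$\times\mathbb{R}$ containing no other zero of $g$. *)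

theory Defs
  imports "HOL-Analysis.Analysis"
begin

text \<open>A metric graph: finite vertex set V, finite nonempty edge set E, each edge e
  identified with the interval [0, L e], with x = 0 at vertex src e and x = L e at tgt e. Functions on the graph are edgewise:
  f :: 'e => real => real, only values on [0, L e] for e in E matter.\<close>

definition metric_graph ::
  "'v set \<Rightarrow> 'e set \<Rightarrow> ('e \<Rightarrow> 'v) \<Rightarrow> ('e \<Rightarrow> 'v) \<Rightarrow> ('e \<Rightarrow> real) \<Rightarrow> bool" where
  "metric_graph V E src tgt L \<longleftrightarrow>
     finite V \<and> finite E \<and> E \<noteq> {} \<and>
     (\<forall>e\<in>E. src e \<in> V \<and> tgt e \<in> V \<and> 0 < L e) \<and>
     (\<forall>u\<in>V. \<forall>w\<in>V. (u, w) \<in> ({(src e, tgt e) | e. e \<in> E} \<union> {(tgt e, src e) | e. e \<in> E})\<^sup>*)"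

text \<open>Degree of a vertex (a loop counts twice).\<close>
definition vdeg :: "'e set \<Rightarrow> ('e \<Rightarrow> 'v) \<Rightarrow> ('e \<Rightarrow> 'v) \<Rightarrow> 'v \<Rightarrow> nat" where
  "vdeg E src tgt v = card {e\<in>E. src e = v} + card {e\<in>E. tgt e = v}"

definition C1_potential :: "'e set \<Rightarrow> ('e \<Rightarrow> real) \<Rightarrow> ('e \<Rightarrow> real \<Rightarrow> real) \<Rightarrow> bool" where
  "C1_potential E L W \<longleftrightarrow>
     (\<forall>e\<in>E. \<exists>W'. continuous_on {0..L e} W' \<and>
        (\<forall>x\<in>{0..L e}. (W e has_real_derivative W' x) (at x within {0..L e})))"

text \<open>f is an eigenfunction of H_W = -d^2/dx^2 + W with eigenvalue mu, with Dirichlet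
  conditions at degree-one vertices and continuity + Kirchhoff conditions at inner vertices.
  d and d2 are the first and second (one-sided at the endpoints) derivatives on each edge.\<close>
definition is_eigenfunction ::
  "'v set \<Rightarrow> 'e set \<Rightarrow> ('e \<Rightarrow> 'v) \<Rightarrow> ('e \<Rightarrow> 'v) \<Rightarrow> ('e \<Rightarrow> real) \<Rightarrow>
   ('e \<Rightarrow> real \<Rightarrow> real) \<Rightarrow> real \<Rightarrow> ('e \<Rightarrow> real \<Rightarrow> real) \<Rightarrow> bool" where
  "is_eigenfunction V E src tgt L W mu f \<longleftrightarrow>
     (\<exists>d d2.
        (\<forall>e\<in>E. \<forall>x\<in>{0..L e}.
           (f e has_real_derivative d e x) (at x within {0..L e}) \<and>
           (d e has_real_derivative d2 e x) (at x within {0..L e}) \<and>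
           - d2 e x + W e x * f e x = mu * f e x) \<and>
        (\<forall>e\<in>E. \<forall>e'\<in>E.
           (src e = src e' \<longrightarrow> f e 0 = f e' 0) \<and>
           (src e = tgt e' \<longrightarrow> f e 0 = f e' (L e')) \<and>
           (tgt e = tgt e' \<longrightarrow> f e (L e) = f e' (L e'))) \<and>
        (\<forall>e\<in>E. (vdeg E src tgt (src e) = 1 \<longrightarrow> f e 0 = 0) \<and>
                (vdeg E src tgt (tgt e) = 1 \<longrightarrow> f e (L e) = 0)) \<and>
        (\<forall>v\<in>V. 2 \<le> vdeg E src tgt v \<longrightarrow>
           (\<Sum>e\<in>{e\<in>E. src e = v}. d e 0) - (\<Sum>e\<in>{e\<in>E. tgt e = v}. d e (L e)) = 0)) \<and>
     (\<exists>e\<in>E. \<exists>x\<in>{0..L e}. f e x \<noteq> 0)"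

definition vanishes_at_vertex ::
  "'e set \<Rightarrow> ('e \<Rightarrow> 'v) \<Rightarrow> ('e \<Rightarrow> 'v) \<Rightarrow> ('e \<Rightarrow> real) \<Rightarrow> ('e \<Rightarrow> real \<Rightarrow> real) \<Rightarrow> 'v \<Rightarrow> bool" where
  "vanishes_at_vertex E src tgt L f v \<longleftrightarrow>
     (\<exists>e\<in>E. (src e = v \<and> f e 0 = 0) \<or> (tgt e = v \<and> f e (L e) = 0))"

definition W_generic ::
  "'v set \<Rightarrow> 'e set \<Rightarrow> ('e \<Rightarrow> 'v) \<Rightarrow> ('e \<Rightarrow> 'v) \<Rightarrow> ('e \<Rightarrow> real) \<Rightarrow> ('e \<Rightarrow> real \<Rightarrow> real) \<Rightarrow> bool" where
  "W_generic V E src tgt L W \<longleftrightarrow>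
     (\<forall>mu f v. is_eigenfunction V E src tgt L W mu f \<longrightarrow> v \<in> V \<longrightarrow> 2 \<le> vdeg E src tgt v \<longrightarrow>
        \<not> vanishes_at_vertex E src tgt L f v)"

definition graph_inner :: "'e set \<Rightarrow> ('e \<Rightarrow> real) \<Rightarrow> ('e \<Rightarrow> real \<Rightarrow> real) \<Rightarrow> ('e \<Rightarrow> real \<Rightarrow> real) \<Rightarrow> real" where
  "graph_inner E L f g = (\<Sum>e\<in>E. integral {0..L e} (\<lambda>x. f e x * g e x))"

text \<open>lam, f enumerate the eigenvalues (nondecreasing, with multiplicity) and an
  L^2-orthonormal system of eigenfunctions: every eigenfunction with eigenvalue mu is a
  linear combination of the f k with lam k = mu.\<close>
definition eigen_system ::
  "'v set \<Rightarrow> 'e set \<Rightarrow> ('e \<Rightarrow> 'v) \<Rightarrow> ('e \<Rightarrow> 'v) \<Rightarrow> ('e \<Rightarrow> real) \<Rightarrow> ('e \<Rightarrow> real \<Rightarrow> real) \<Rightarrow>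
   (nat \<Rightarrow> real) \<Rightarrow> (nat \<Rightarrow> 'e \<Rightarrow> real \<Rightarrow> real) \<Rightarrow> bool" where
  "eigen_system V E src tgt L W lam f \<longleftrightarrow>
     mono lam \<and>
     (\<forall>k. is_eigenfunction V E src tgt L W (lam k) (f k)) \<and>
     (\<forall>j k. graph_inner E L (f j) (f k) = (if j = k then 1 else 0)) \<and>
     (\<forall>mu \<phi>. is_eigenfunction V E src tgt L W mu \<phi> \<longrightarrow>
        (\<exists>c. \<forall>e\<in>E. \<forall>x\<in>{0..L e}. \<phi> e x = (\<Sum>k\<in>{k. lam k = mu}. c k * f k e x)))"

definition isolated_zero_on_edge ::
  "('e \<Rightarrow> real) \<Rightarrow> ('e \<Rightarrow> real \<Rightarrow> real \<Rightarrow> real) \<Rightarrow> 'e \<Rightarrow> real \<Rightarrow> real \<Rightarrow> bool" where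
  "isolated_zero_on_edge L g e x0 y0 \<longleftrightarrow>
     0 < x0 \<and> x0 < L e \<and> g e x0 y0 = 0 \<and>
     (\<exists>\<epsilon>>0. \<forall>x y. 0 < x \<and> x < L e \<and> dist (x, y) (x0, y0) < \<epsilon> \<and> (x, y) \<noteq> (x0, y0)
        \<longrightarrow> g e x y \<noteq> 0)"

end

theory Submission imports Defs begin
lemma parabolic_pos:
  fixes G Gd Gdd Gy :: "real \<Rightarrow> real \<Rightarrow> real" and Wf :: "real \<Rightarrow> real"
  assumes ab: "a < b" and cd: "c < d"
    and cont: "continuous_on ({a..b} \<times> {c..d}) (\<lambda>z. G (fst z) (snd z))"
    and Wc: "continuous_on {a..b} Wf"
    and dx: "\<And>x y. x \<in> {a<..<b} \<Longrightarrow> y \<in> {c<..d} \<Longrightarrow> ((\<lambda>x. G x y) has_real_derivative Gd x y) (at x)"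
    and dxx: "\<And>x y. x \<in> {a<..<b} \<Longrightarrow> y \<in> {c<..d} \<Longrightarrow> ((\<lambda>x. Gd x y) has_real_derivative Gdd x y) (at x)"
    and dy: "\<And>x y. x \<in> {a<..<b} \<Longrightarrow> y \<in> {c<..d} \<Longrightarrow> ((\<lambda>y. G x y) has_real_derivative Gy x y) (at y)"
    and heat: "\<And>x y. x \<in> {a<..<b} \<Longrightarrow> y \<in> {c<..d} \<Longrightarrow> Gy x y = Gdd x y - Wf x * G x y"
    and pos: "\<And>x y. (x,y) \<in> {a,b} \<times> {c..d} \<union> {a..b} \<times> {c} \<Longrightarrow> G x y > 0"
    and xy: "x \<in> {a..b}" "y \<in> {c..d}"
  shows "G x y > 0"
proof -
  have "bounded (Wf ` {a..b})"
    by (intro compact_imp_bounded compact_continuous_image Wc) simp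
  then obtain M where M: "\<And>x. x \<in> {a..b} \<Longrightarrow> \<bar>Wf x\<bar> \<le> M"
    unfolding bounded_real by blast
  define B where "B = M + 1"
  define A where "A = 2 * M + 2"
  define P where "P = {a,b} \<times> {c..d} \<union> {a..b} \<times> {c}"
  define R where "R = {a..b} \<times> {c..d}"
  have PR: "P \<subseteq> R" using ab cd unfolding P_def R_def by auto
  have cP: "compact P" unfolding P_def
    by (intro compact_Un compact_Times) (auto intro: finite_imp_compact)
  have neP: "P \<noteq> {}" unfolding P_def using ab cd by auto
  define h where "h z = exp (- B * snd z) * G (fst z) (snd z) * exp (A * snd z)" for z :: "real \<times> real"
  have "continuous_on P h" unfolding h_def
    by (intro continuous_intros continuous_on_subset[OF cont PR[unfolded R_def]])
  then obtain zm where zm: "zm \<in> P" "\<And>z. z \<in> P \<Longrightarrow> h zm \<le> h z"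
    using continuous_attains_inf[OF cP neP] by blast
  define m where "m = h zm"
  have m0: "m > 0" unfolding m_def h_def using pos[of "fst zm" "snd zm"] zm(1) unfolding P_def
    by simp
  define \<epsilon> where "\<epsilon> = m / 2"
  have e0: "\<epsilon> > 0" using m0 unfolding \<epsilon>_def by simp
  define w where "w z = exp (- B * snd z) * G (fst z) (snd z) - \<epsilon> * exp (- A * snd z)" for z :: "real \<times> real"
  have wP: "w z > 0" if "z \<in> P" for z
  proof -
    have "m \<le> h z" using zm that unfolding m_def by blast
    then have "m * exp (- A * snd z) \<le> exp (- B * snd z) * G (fst z) (snd z)"
      unfolding h_def by (simp add: exp_minus field_simps)
    moreover have "\<epsilon> * exp (- A * snd z) < m * exp (- A * snd z)"
      using m0 unfolding \<epsilon>_def by simp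
    ultimately show ?thesis unfolding w_def by linarith
  qed
  have cR: "compact R" unfolding R_def by (intro compact_Times) auto
  have neR: "R \<noteq> {}" unfolding R_def using ab cd by auto
  have "continuous_on R w" unfolding w_def R_def
    by (intro continuous_intros cont)
  then obtain p where p: "p \<in> R" "\<And>z. z \<in> R \<Longrightarrow> w p \<le> w z"
    using continuous_attains_inf[OF cR neR] by blast
  have wp: "w p > 0"
  proof (cases "p \<in> P")
    case True then show ?thesis using wP by blast
  next
    case False
    obtain xp yp where pxy: "p = (xp, yp)" by (cases p)
    have xpi: "xp \<in> {a<..<b}" and ypi: "yp \<in> {c<..d}"
      using False p(1) unfolding pxy P_def R_def by auto
    show ?thesis
    proof (rule ccontr)
      assume wle: "\<not> w p > 0"
      have Gmin: "G xp yp \<le> G x yp" if "x \<in> {a..b}" for x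
      proof -
        have "w p \<le> w (x, yp)" using p(2)[of "(x,yp)"] that ypi unfolding R_def by auto
        then show ?thesis unfolding pxy w_def by simp
      qed
      have G1z: "Gd xp yp = 0"
      proof (rule DERIV_local_min[OF dx[OF xpi ypi]])
        show "0 < min (xp - a) (b - xp)" using xpi by simp
        show "\<forall>y. \<bar>xp - y\<bar> < min (xp - a) (b - xp) \<longrightarrow> G xp yp \<le> G y yp"
          by (auto intro!: Gmin)
      qed
      have G2p: "Gdd xp yp \<ge> 0"
      proof (rule ccontr)
        assume "\<not> Gdd xp yp \<ge> 0"
        then obtain dd where dd: "dd > 0" "\<And>h. h > 0 \<Longrightarrow> h < dd \<Longrightarrow> Gd xp yp > Gd (xp + h) yp"
          using DERIV_neg_dec_right[OF dxx[OF xpi ypi]] by force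
        define hh where "hh = min (dd/2) ((b - xp)/2)"
        have hh: "hh > 0" "hh < dd" "xp + hh < b" using dd xpi unfolding hh_def by (auto simp: min_def field_simps)
        have "\<exists>z. xp < z \<and> z < xp + hh \<and> G (xp + hh) yp - G xp yp = (xp + hh - xp) * Gd z yp"
          by (rule MVT2) (use hh xpi in \<open>auto intro!: dx ypi\<close>)
        then obtain z where z: "xp < z" "z < xp + hh" "G (xp + hh) yp - G xp yp = hh * Gd z yp"
          by auto
        have "Gd z yp < 0" using dd(2)[of "z - xp"] z hh G1z by auto
        then have "G (xp + hh) yp < G xp yp" using z(3) hh
          by (smt (verit) mult_pos_neg)
        moreover have "G xp yp \<le> G (xp + hh) yp" using Gmin hh xpi by auto
        ultimately show False by simp
      qed
      define D where "D = - B * exp (- B * yp) * G xp yp + exp (- B * yp) * Gy xp yp + \<epsilon> * A * exp (- A * yp)"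
      have dpsi: "((\<lambda>y. w (xp, y)) has_real_derivative D) (at yp)"
        unfolding w_def D_def
        by (auto intro!: derivative_eq_intros dy[OF xpi ypi] simp: algebra_simps)
      have Dle: "D \<le> 0"
      proof (rule ccontr)
        assume "\<not> D \<le> 0"
        then obtain dd where dd: "dd > 0" "\<And>h. h > 0 \<Longrightarrow> h < dd \<Longrightarrow> w (xp, yp - h) < w (xp, yp)"
          using DERIV_pos_inc_left[OF dpsi] by force
        define hh where "hh = min (dd/2) ((yp - c)/2)"
        have hh: "hh > 0" "hh < dd" "c < yp - hh" using dd ypi unfolding hh_def by (auto simp: min_def field_simps)
        have "w (xp, yp) \<le> w (xp, yp - hh)"
          using p(2)[of "(xp, yp - hh)"] hh xpi ypi unfolding pxy R_def by auto
        then show False using dd(2)[OF hh(1,2)] by simp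
      qed
      define E1 where "E1 = exp (- B * yp)"
      define E2 where "E2 = exp (- A * yp)"
      define Q where "Q = Wf xp + B"
      have E: "E1 > 0" "E2 > 0" unfolding E1_def E2_def by auto
      have Q: "Q > 0" "A - Q > 0" using M[of xp] xpi unfolding Q_def A_def B_def by auto
      have wle': "E1 * G xp yp \<le> \<epsilon> * E2" using wle unfolding w_def pxy E1_def E2_def by simp
      have D2: "D = E1 * Gdd xp yp - Q * (E1 * G xp yp) + \<epsilon> * A * E2"
        unfolding D_def E1_def E2_def Q_def heat[OF xpi ypi] by (simp add: algebra_simps)
      have "E1 * Gdd xp yp \<ge> 0" using E G2p by simp
      moreover have "Q * (E1 * G xp yp) \<le> Q * (\<epsilon> * E2)" using Q wle' by (simp add: mult_left_mono)
      moreover have "\<epsilon> * A * E2 - Q * (\<epsilon> * E2) > 0"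
      proof -
        have "\<epsilon> * A * E2 - Q * (\<epsilon> * E2) = (\<epsilon> * E2) * (A - Q)" by (simp add: algebra_simps)
        also have "\<dots> > 0" using e0 E Q by simp
        finally show ?thesis .
      qed
      ultimately show False using Dle D2 by linarith
    qed
  qed
  have "w (x, y) \<ge> w p" using p(2)[of "(x,y)"] xy unfolding R_def by auto
  then have "exp (- B * y) * G x y > \<epsilon> * exp (- A * y)" using wp unfolding w_def by simp
  moreover have "\<epsilon> * exp (- A * y) > 0" using e0 by simp
  ultimately have "exp (- B * y) * G x y > 0" by linarith
  then show ?thesis by (simp add: zero_less_mult_iff)
qed

lemma ne_emptyI: "x \<in> S \<Longrightarrow> S \<noteq> {}" by auto


lemma sign_const:
  fixes G :: "real \<Rightarrow> real \<Rightarrow> real"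
  assumes ab: "a < b" and cd: "c < d"
    and cont: "continuous_on ({a,b} \<times> {c..d} \<union> {a..b} \<times> {c}) (\<lambda>z. G (fst z) (snd z))"
    and nz: "\<And>x y. (x,y) \<in> {a,b} \<times> {c..d} \<union> {a..b} \<times> {c} \<Longrightarrow> G x y \<noteq> 0"
  shows "(\<forall>z \<in> {a,b} \<times> {c..d} \<union> {a..b} \<times> {c}. G (fst z) (snd z) > 0) \<or>
         (\<forall>z \<in> {a,b} \<times> {c..d} \<union> {a..b} \<times> {c}. G (fst z) (snd z) < 0)"
proof (rule ccontr)
  define P where "P = {a,b} \<times> {c..d} \<union> {a..b} \<times> {c}"
  have Peq: "P = ({a} \<times> {c..d} \<union> {a..b} \<times> {c}) \<union> {b} \<times> {c..d}"
    unfolding P_def by blast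
  have i1: "(a,c) \<in> {a} \<times> {c..d} \<inter> {a..b} \<times> {c}" using ab cd by auto
  have c1: "connected ({a} \<times> {c..d} \<union> {a..b} \<times> {c})"
  proof (rule connected_Un)
    show "{a} \<times> {c..d} \<inter> {a..b} \<times> {c} \<noteq> {}" using i1 by blast
  qed (auto intro!: connected_Times)
  have i2: "(b,c) \<in> ({a} \<times> {c..d} \<union> {a..b} \<times> {c}) \<inter> {b} \<times> {c..d}" using ab cd by auto
  have conP: "connected P" unfolding Peq
  proof (rule connected_Un)
    show "({a} \<times> {c..d} \<union> {a..b} \<times> {c}) \<inter> {b} \<times> {c..d} \<noteq> {}" using i2 by blast
    show "connected ({a} \<times> {c..d} \<union> {a..b} \<times> {c})" by (rule c1)
    show "connected ({b} \<times> {c..d})" by (intro connected_Times) auto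
  qed
  assume "\<not> ?thesis"
  then have "\<not> (\<forall>z\<in>P. G (fst z) (snd z) > 0)" "\<not> (\<forall>z\<in>P. G (fst z) (snd z) < 0)"
    unfolding P_def by blast+
  then obtain z1 z2 where z: "z1 \<in> P" "z2 \<in> P" "G (fst z1) (snd z1) \<le> 0" "G (fst z2) (snd z2) \<ge> 0"
    by (meson not_less)
  let ?S = "(\<lambda>z. G (fst z) (snd z)) ` P"
  have "connected ?S" using conP cont unfolding P_def by (intro connected_continuous_image)
  then have "\<exists>s\<in>?S. inner 1 s = (0::real)"
    by (rule connected_ivt_hyperplane[of _ "G (fst z1) (snd z1)" "G (fst z2) (snd z2)"]) (use z in auto)
  then obtain s where "s \<in> ?S" "s = 0" by auto
  then obtain z where "z \<in> P" "G (fst z) (snd z) = 0" by blast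
  then show False using nz[of "fst z" "snd z"] unfolding P_def by simp
qed

theorem lemma6:
  fixes V :: "'v set" and E :: "'e set" and src tgt :: "'e \<Rightarrow> 'v" and L :: "'e \<Rightarrow> real"
    and W :: "'e \<Rightarrow> real \<Rightarrow> real"
    and lam :: "nat \<Rightarrow> real" and f :: "nat \<Rightarrow> 'e \<Rightarrow> real \<Rightarrow> real"
    and K :: "nat set" and a :: "nat \<Rightarrow> real"
  assumes "metric_graph V E src tgt L"
    and "C1_potential E L W"
    and "W_generic V E src tgt L W"
    and "eigen_system V E src tgt L W lam f"
    and "finite K"
    and "\<forall>k\<in>K. a k \<noteq> 0"
  shows "\<not> (\<exists>e\<in>E. \<exists>x0 y0. isolated_zero_on_edge L
            (\<lambda>e x y. \<Sum>k\<in>K. a k * exp (- lam k * y) * f k e x) e x0 y0)"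
proof
  assume "\<exists>e\<in>E. \<exists>x0 y0. isolated_zero_on_edge L
            (\<lambda>e x y. \<Sum>k\<in>K. a k * exp (- lam k * y) * f k e x) e x0 y0"
  then obtain e x0 y0 where eE: "e \<in> E" and iz: "isolated_zero_on_edge L
            (\<lambda>e x y. \<Sum>k\<in>K. a k * exp (- lam k * y) * f k e x) e x0 y0" by blast
  define G where "G x y = (\<Sum>k\<in>K. a k * exp (- lam k * y) * f k e x)" for x y
  from iz obtain \<epsilon>0 where x0: "0 < x0" "x0 < L e" and G0: "G x0 y0 = 0" and e0: "\<epsilon>0 > 0"
    and iso: "\<And>x y. 0 < x \<Longrightarrow> x < L e \<Longrightarrow> dist (x, y) (x0, y0) < \<epsilon>0 \<Longrightarrow> (x, y) \<noteq> (x0, y0) \<Longrightarrow> G x y \<noteq> 0"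
    unfolding isolated_zero_on_edge_def G_def by blast
  have "\<forall>k. \<exists>d d2. \<forall>x\<in>{0..L e}. (f k e has_real_derivative d x) (at x within {0..L e}) \<and>
           (d has_real_derivative d2 x) (at x within {0..L e}) \<and>
           - d2 x + W e x * f k e x = lam k * f k e x"
  proof
    fix k
    have "is_eigenfunction V E src tgt L W (lam k) (f k)" using assms(4) unfolding eigen_system_def by blast
    then obtain d d2 where "\<forall>e\<in>E. \<forall>x\<in>{0..L e}.
           (f k e has_real_derivative d e x) (at x within {0..L e}) \<and>
           (d e has_real_derivative d2 e x) (at x within {0..L e}) \<and>
           - d2 e x + W e x * f k e x = lam k * f k e x"
      unfolding is_eigenfunction_def by blast
    then show "\<exists>d d2. \<forall>x\<in>{0..L e}. (f k e has_real_derivative d x) (at x within {0..L e}) \<and>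
           (d has_real_derivative d2 x) (at x within {0..L e}) \<and>
           - d2 x + W e x * f k e x = lam k * f k e x" using eE by blast
  qed
  then obtain D where "\<forall>k. \<exists>d2. \<forall>x\<in>{0..L e}. (f k e has_real_derivative D k x) (at x within {0..L e}) \<and>
           (D k has_real_derivative d2 x) (at x within {0..L e}) \<and>
           - d2 x + W e x * f k e x = lam k * f k e x"
    by (rule choice[THEN exE]) blast
  then obtain D2 where D2: "\<forall>k. \<forall>x\<in>{0..L e}. (f k e has_real_derivative D k x) (at x within {0..L e}) \<and>
           (D k has_real_derivative D2 k x) (at x within {0..L e}) \<and>
           - D2 k x + W e x * f k e x = lam k * f k e x"
    by (rule choice[THEN exE]) blast
  have DD: "\<And>k x. x \<in> {0..L e} \<Longrightarrow> (f k e has_real_derivative D k x) (at x within {0..L e}) \<and>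
           (D k has_real_derivative D2 k x) (at x within {0..L e}) \<and>
           - D2 k x + W e x * f k e x = lam k * f k e x"
    using D2 by blast
  have fcont: "continuous_on {0..L e} (f k e)" for k
    by (rule DERIV_continuous_on) (use DD in blast)
  obtain W' where "\<forall>x\<in>{0..L e}. (W e has_real_derivative W' x) (at x within {0..L e})"
    using assms(2) eE unfolding C1_potential_def by blast
  then have Wcont: "continuous_on {0..L e} (W e)"
    by (intro DERIV_continuous_on) blast
  have dint: "\<And>x. x \<in> {0<..<L e} \<Longrightarrow> (f k e has_real_derivative D k x) (at x) \<and>
           (D k has_real_derivative D2 k x) (at x) \<and> D2 k x = (W e x - lam k) * f k e x" for k
  proof -
    fix x assume x: "x \<in> {0<..<L e}"
    then have xi: "x \<in> {0..L e}" and eq: "at x within {0..L e} = at x" by (auto simp: at_within_Icc_at)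
    from DD[OF xi, of k] show "(f k e has_real_derivative D k x) (at x) \<and>
           (D k has_real_derivative D2 k x) (at x) \<and> D2 k x = (W e x - lam k) * f k e x"
      unfolding eq by (simp add: algebra_simps)
  qed
  define \<delta> where "\<delta> = min (x0/2) (min ((L e - x0)/2) (\<epsilon>0/2))"
  have d0: "\<delta> > 0" "x0 - \<delta> > 0" "x0 + \<delta> < L e" "\<delta> \<le> \<epsilon>0/2"
    using x0 e0 unfolding \<delta>_def by (auto simp: min_def field_simps)
  define a' b' c' d' where "a' = x0 - \<delta>" and "b' = x0 + \<delta>" and "c' = y0 - \<delta>" and "d' = y0"
  define P where "P = {a',b'} \<times> {c'..d'} \<union> {a'..b'} \<times> {c'}"
  have ab: "a' < b'" and cd: "c' < d'" using d0 unfolding a'_def b'_def c'_def d'_def by auto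
  have sub: "{a'..b'} \<subseteq> {0..L e}" using d0 unfolding a'_def b'_def by auto
  have subo: "{a'<..<b'} \<subseteq> {0<..<L e}" using d0 unfolding a'_def b'_def by auto
  have Gcont: "continuous_on ({a'..b'} \<times> {c'..d'}) (\<lambda>z. G (fst z) (snd z))"
    unfolding G_def
  proof (intro continuous_intros)
    fix k
    show "continuous_on ({a'..b'} \<times> {c'..d'}) (\<lambda>z. f k e (fst z))"
      by (rule continuous_on_compose2[OF fcont[of k] continuous_on_fst]) (use sub in auto)
  qed
  define G1 where "G1 x y = (\<Sum>k\<in>K. a k * exp (- lam k * y) * D k x)" for x y
  define G2 where "G2 x y = (\<Sum>k\<in>K. a k * exp (- lam k * y) * D2 k x)" for x y
  define Gy where "Gy x y = (\<Sum>k\<in>K. a k * (exp (- lam k * y) * (- lam k)) * f k e x)" for x y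
  have dx: "((\<lambda>x. G x y) has_real_derivative G1 x y) (at x)" if "x \<in> {a'<..<b'}" for x y
    unfolding G_def G1_def
  proof (rule DERIV_sum)
    fix k
    have "x \<in> {0<..<L e}" using that subo by blast
    then show "((\<lambda>x. a k * exp (- lam k * y) * f k e x) has_real_derivative a k * exp (- lam k * y) * D k x) (at x)"
      using dint by (intro DERIV_cmult) blast
  qed
  have dxx: "((\<lambda>x. G1 x y) has_real_derivative G2 x y) (at x)" if "x \<in> {a'<..<b'}" for x y
    unfolding G2_def G1_def
  proof (rule DERIV_sum)
    fix k
    have "x \<in> {0<..<L e}" using that subo by blast
    then show "((\<lambda>x. a k * exp (- lam k * y) * D k x) has_real_derivative a k * exp (- lam k * y) * D2 k x) (at x)"
      using dint by (intro DERIV_cmult) blast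
  qed
  have dy: "((\<lambda>y. G x y) has_real_derivative Gy x y) (at y)" for x y
    unfolding G_def Gy_def
  proof (rule DERIV_sum)
    fix k
    have "((\<lambda>y. exp (- lam k * y)) has_real_derivative exp (- lam k * y) * (- lam k)) (at y)"
      by (auto intro!: derivative_eq_intros)
    then have "((\<lambda>y. a k * exp (- lam k * y)) has_real_derivative a k * (exp (- lam k * y) * (- lam k))) (at y)"
      by (rule DERIV_cmult)
    then show "((\<lambda>y. a k * exp (- lam k * y) * f k e x) has_real_derivative a k * (exp (- lam k * y) * (- lam k)) * f k e x) (at y)"
      by (rule DERIV_cmult_right)
  qed
  have heat: "Gy x y = G2 x y - W e x * G x y" if "x \<in> {a'<..<b'}" for x y
  proof -
    have "G2 x y - W e x * G x y = (\<Sum>k\<in>K. a k * exp (- lam k * y) * D2 k x - W e x * (a k * exp (- lam k * y) * f k e x))"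
      unfolding G2_def G_def by (simp add: sum_subtractf sum_distrib_left)
    also have "\<dots> = Gy x y" unfolding Gy_def
    proof (rule sum.cong)
      fix k assume "k \<in> K"
      have "x \<in> {0<..<L e}" using that subo by blast
      then have eq: "D2 k x = (W e x - lam k) * f k e x" using dint by blast
      show "a k * exp (- lam k * y) * D2 k x - W e x * (a k * exp (- lam k * y) * f k e x) =
        a k * (exp (- lam k * y) * (- lam k)) * f k e x" unfolding eq by (simp add: algebra_simps)
    qed simp
    finally show ?thesis by simp
  qed
  have nz: "G x y \<noteq> 0" if "(x,y) \<in> P" for x y
  proof (rule iso)
    have xr: "a' \<le> x" "x \<le> b'" and yr: "c' \<le> y" "y \<le> d'" using that ab cd unfolding P_def by auto
    show "0 < x" "x < L e" using xr d0 unfolding a'_def b'_def by auto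
    show "(x, y) \<noteq> (x0, y0)" using that d0 unfolding P_def a'_def b'_def c'_def by auto
    have "\<bar>x - x0\<bar> \<le> \<delta>" "\<bar>y - y0\<bar> \<le> \<delta>" using xr yr d0 unfolding a'_def b'_def c'_def d'_def by auto
    then have "\<bar>x - x0\<bar>^2 \<le> \<delta>^2" "\<bar>y - y0\<bar>^2 \<le> \<delta>^2"
      by (meson abs_ge_zero power_mono)+
    then have "(x - x0)^2 \<le> \<delta>^2" "(y - y0)^2 \<le> \<delta>^2" by simp_all
    moreover have "\<delta>^2 \<le> (\<epsilon>0/2)^2" by (rule power_mono) (use d0 in auto)
    moreover have "(\<epsilon>0/2)^2 = \<epsilon>0^2/4" by (simp add: power_divide)
    moreover have "\<epsilon>0^2 > 0" using e0 by simp
    ultimately have lt: "(x - x0)^2 + (y - y0)^2 < \<epsilon>0^2" by linarith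
    have "dist (x, y) (x0, y0) = sqrt ((x - x0)^2 + (y - y0)^2)"
      by (simp add: dist_Pair_Pair dist_real_def power2_abs)
    also have "\<dots> < sqrt (\<epsilon>0^2)" using lt by (rule real_sqrt_less_mono)
    also have "\<dots> = \<epsilon>0" using e0 by simp
    finally show "dist (x, y) (x0, y0) < \<epsilon>0" .
  qed
  have Pcont: "continuous_on P (\<lambda>z. G (fst z) (snd z))"
    by (rule continuous_on_subset[OF Gcont]) (use ab cd in \<open>auto simp: P_def\<close>)
  have Wc: "continuous_on {a'..b'} (W e)" using continuous_on_subset[OF Wcont sub] .
  have x0i: "x0 \<in> {a'..b'}" "y0 \<in> {c'..d'}" using d0 unfolding a'_def b'_def c'_def d'_def by auto
  from sign_const[OF ab cd Pcont[unfolded P_def] nz[unfolded P_def]]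
  show False
  proof
    assume posP: "\<forall>z\<in>{a', b'} \<times> {c'..d'} \<union> {a'..b'} \<times> {c'}. 0 < G (fst z) (snd z)"
    have "G x0 y0 > 0"
    proof (rule parabolic_pos[OF ab cd Gcont Wc dx dxx dy heat _ x0i])
      show "G x y > 0" if "(x, y) \<in> {a', b'} \<times> {c'..d'} \<union> {a'..b'} \<times> {c'}" for x y
        using posP that by force
    qed
    then show False using G0 by simp
  next
    assume neg: "\<forall>z\<in>{a', b'} \<times> {c'..d'} \<union> {a'..b'} \<times> {c'}. G (fst z) (snd z) < 0"
    have "- G x0 y0 > 0"
    proof (rule parabolic_pos[where G="\<lambda>x y. - G x y" and Gd="\<lambda>x y. - G1 x y"
          and Gdd="\<lambda>x y. - G2 x y" and Gy="\<lambda>x y. - Gy x y", OF ab cd _ Wc _ _ _ _ _ x0i])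
      show "continuous_on ({a'..b'} \<times> {c'..d'}) (\<lambda>z. - G (fst z) (snd z))"
        by (intro continuous_intros Gcont)
      show "((\<lambda>x. - G x y) has_real_derivative - G1 x y) (at x)" if "x \<in> {a'<..<b'}" for x y
        using dx[OF that] by (rule DERIV_minus)
      show "((\<lambda>x. - G1 x y) has_real_derivative - G2 x y) (at x)" if "x \<in> {a'<..<b'}" for x y
        using dxx[OF that] by (rule DERIV_minus)
      show "((\<lambda>y. - G x y) has_real_derivative - Gy x y) (at y)" for x y
        using dy by (rule DERIV_minus)
      show "- Gy x y = - G2 x y - W e x * - G x y" if "x \<in> {a'<..<b'}" for x y
        using heat[OF that, of y] by simp
      show "- G x y > 0" if "(x, y) \<in> {a', b'} \<times> {c'..d'} \<union> {a'..b'} \<times> {c'}" for x y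
        using neg that by force
    qed
    then show False using G0 by simp
  qed
qed

end
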